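(* For every type $A$: (CR1) $[\![A]\!]\subseteq \mathrm{SN}$; (CR2) if $t\in[\![A]\!]$ and $t\to_{\mathsf{dist}} s$, then $s\in[\![A]\!]$; (CR3) if $t$ is neutral and $\mathrm{Red}(t)\subseteq[\![A]\!]$, then $t\in[\![A]\!]$.
   Context: Terms: $t,s,u ::= x \mid \lambda x.t \mid ts \mid \langle t,s\rangle \mid \pi_1 t \mid \pi_2 t$ (up to $\alpha$-renaming). Top-level rules: $(\lambda x.t)s \mapsto t\{x:=s\}$; $\pi_i\langle t_1,t_2\rangle \mapsto t_i$ ($i=1,2$); $\langle t,s\rangle u \mapsto \langle tu, su\rangle$; $\pi_i(\lambda x.t)\mapsto \lambda x.\pi_i t$ ($i=1,2$); $\to_{\mathsf{dist}}$ is the closure of these rules under all term constructors. $\mathrm{SN}$ is the set of strongly normalizing terms for $\to_{\mathsf{dist}}$; $\mathrm{Red}(t)=\{s\mid t\to_{\mathsf{dist}} s\}$. A term is neutral if it is a variable, an application $ts$, or a projection $\pi_i t$. Types: $A ::= \tau \mid A\Rightarrow A \mid A\wedge A$. Interpretation: $[\![\tau]\!]=\mathrm{SN}$; $[\![A\Rightarrow B]\!]=\{t\mid \forall s\in[\![A]\!],\ ts\in[\![B]\!]\}$; $[\![A\wedge B]\!]=\{t\mid \pi_1t\in[\![A]\!]\text{ and }\pi_2 t\in[\![B]\!]\}$. *)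

theory Defs
  imports Main
begin

text \<open>Terms up to alpha-renaming, represented with de Bruijn indices.\<close>
datatype trm =
    Var nat
  | Lam trm
  | App trm trm
  | Pair trm trm
  | Pi1 trm
  | Pi2 trm

fun lift :: "trm \<Rightarrow> nat \<Rightarrow> trm" where
  "lift (Var i) k = (if i < k then Var i else Var (Suc i))"
| "lift (Lam t) k = Lam (lift t (Suc k))"
| "lift (App t s) k = App (lift t k) (lift s k)"
| "lift (Pair t s) k = Pair (lift t k) (lift s k)"
| "lift (Pi1 t) k = Pi1 (lift t k)"
| "lift (Pi2 t) k = Pi2 (lift t k)"

fun subst :: "trm \<Rightarrow> nat \<Rightarrow> trm \<Rightarrow> trm" where
  "subst (Var i) k s = (if k < i then Var (i - 1) else if i = k then s else Var i)"
| "subst (Lam t) k s = Lam (subst t (Suc k) (lift s 0))"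
| "subst (App t u) k s = App (subst t k s) (subst u k s)"
| "subst (Pair t u) k s = Pair (subst t k s) (subst u k s)"
| "subst (Pi1 t) k s = Pi1 (subst t k s)"
| "subst (Pi2 t) k s = Pi2 (subst t k s)"

inductive dist :: "trm \<Rightarrow> trm \<Rightarrow> bool" (infix "\<rightarrow>\<^sub>d" 50) where
  beta:     "App (Lam t) s \<rightarrow>\<^sub>d subst t 0 s"
| proj1:    "Pi1 (Pair t1 t2) \<rightarrow>\<^sub>d t1"
| proj2:    "Pi2 (Pair t1 t2) \<rightarrow>\<^sub>d t2"
| pairapp:  "App (Pair t s) u \<rightarrow>\<^sub>d Pair (App t u) (App s u)"
| pi1lam:   "Pi1 (Lam t) \<rightarrow>\<^sub>d Lam (Pi1 t)"
| pi2lam:   "Pi2 (Lam t) \<rightarrow>\<^sub>d Lam (Pi2 t)"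
| lam:      "t \<rightarrow>\<^sub>d t' \<Longrightarrow> Lam t \<rightarrow>\<^sub>d Lam t'"
| appL:     "t \<rightarrow>\<^sub>d t' \<Longrightarrow> App t s \<rightarrow>\<^sub>d App t' s"
| appR:     "s \<rightarrow>\<^sub>d s' \<Longrightarrow> App t s \<rightarrow>\<^sub>d App t s'"
| pairL:    "t \<rightarrow>\<^sub>d t' \<Longrightarrow> Pair t s \<rightarrow>\<^sub>d Pair t' s"
| pairR:    "s \<rightarrow>\<^sub>d s' \<Longrightarrow> Pair t s \<rightarrow>\<^sub>d Pair t s'"
| pi1:      "t \<rightarrow>\<^sub>d t' \<Longrightarrow> Pi1 t \<rightarrow>\<^sub>d Pi1 t'"
| pi2:      "t \<rightarrow>\<^sub>d t' \<Longrightarrow> Pi2 t \<rightarrow>\<^sub>d Pi2 t'"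

text \<open>Strongly normalizing terms: no infinite reduction sequence starting from t
  (the accessible part of the converse reduction relation).\<close>
definition SN :: "trm set" where
  "SN = {t. Wellfounded.accp (\<lambda>s t. t \<rightarrow>\<^sub>d s) t}"

definition Red :: "trm \<Rightarrow> trm set" where
  "Red t = {s. t \<rightarrow>\<^sub>d s}"

definition neutral :: "trm \<Rightarrow> bool" where
  "neutral t \<longleftrightarrow> (\<exists>i. t = Var i) \<or> (\<exists>u v. t = App u v) \<or> (\<exists>u. t = Pi1 u) \<or> (\<exists>u. t = Pi2 u)"

datatype ty = Base | Arr ty ty | Conj ty ty

fun interp :: "ty \<Rightarrow> trm set" where
  "interp Base = SN"
| "interp (Arr A B) = {t. \<forall>s\<in>interp A. App t s \<in> interp B}"
| "interp (Conj A B) = {t. Pi1 t \<in> interp A \<and> Pi2 t \<in> interp B}"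

end

theory Submission
  imports Defs
begin

lemma SN_intro: "(\<And>s. t \<rightarrow>\<^sub>d s \<Longrightarrow> s \<in> SN) \<Longrightarrow> t \<in> SN"
  unfolding SN_def mem_Collect_eq by (rule accp.accI)

lemma SN_step: "t \<in> SN \<Longrightarrow> t \<rightarrow>\<^sub>d s \<Longrightarrow> s \<in> SN"
  unfolding SN_def by (auto intro: accp_downward)

lemma SN_app_aux: "Wellfounded.accp (\<lambda>s t. t \<rightarrow>\<^sub>d s) u \<Longrightarrow> \<forall>t s. u = App t s \<longrightarrow> Wellfounded.accp (\<lambda>s t. t \<rightarrow>\<^sub>d s) t"
proof (induction rule: accp.induct)
  case (accI x)
  show ?case
  proof (intro allI impI)
    fix t s assume "x = App t s"
    show "Wellfounded.accp (\<lambda>s t. t \<rightarrow>\<^sub>d s) t"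
    proof (rule accp.accI)
      fix y assume "t \<rightarrow>\<^sub>d y"
      then have "x \<rightarrow>\<^sub>d App y s" using \<open>x = App t s\<close> dist.appL by simp
      then show "Wellfounded.accp (\<lambda>s t. t \<rightarrow>\<^sub>d s) y" using accI.IH by simp
    qed
  qed
qed

lemma SN_app: "App t s \<in> SN \<Longrightarrow> t \<in> SN"
  unfolding SN_def using SN_app_aux by blast

lemma SN_pi1_aux: "Wellfounded.accp (\<lambda>s t. t \<rightarrow>\<^sub>d s) u \<Longrightarrow> \<forall>t. u = Pi1 t \<longrightarrow> Wellfounded.accp (\<lambda>s t. t \<rightarrow>\<^sub>d s) t"
proof (induction rule: accp.induct)
  case (accI x)
  show ?case
  proof (intro allI impI)
    fix t assume "x = Pi1 t"
    show "Wellfounded.accp (\<lambda>s t. t \<rightarrow>\<^sub>d s) t"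
    proof (rule accp.accI)
      fix y assume "t \<rightarrow>\<^sub>d y"
      then have "x \<rightarrow>\<^sub>d Pi1 y" using \<open>x = Pi1 t\<close> dist.pi1 by simp
      then show "Wellfounded.accp (\<lambda>s t. t \<rightarrow>\<^sub>d s) y" using accI.IH by simp
    qed
  qed
qed

lemma SN_pi1: "Pi1 t \<in> SN \<Longrightarrow> t \<in> SN"
  unfolding SN_def using SN_pi1_aux by blast

lemma SN_induct[consumes 1, case_names step]:
  assumes "s \<in> SN" and "\<And>s. s \<in> SN \<Longrightarrow> (\<And>s'. s \<rightarrow>\<^sub>d s' \<Longrightarrow> P s') \<Longrightarrow> P s"
  shows "P s"
proof -
  have "Wellfounded.accp (\<lambda>s t. t \<rightarrow>\<^sub>d s) s" using assms(1) unfolding SN_def by simp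
  then show ?thesis
  proof (induction rule: accp.induct)
    case (accI x)
    have "x \<in> SN" unfolding SN_def using accI.hyps by (simp add: accp.accI)
    then show ?case using accI.IH by (rule assms(2))
  qed
qed

lemma neutral_app: "neutral (App t s)" and neutral_pi1: "neutral (Pi1 t)"
  and neutral_pi2: "neutral (Pi2 t)" and neutral_var: "neutral (Var i)"
  by (auto simp: neutral_def)

theorem lemma5:
  fixes A :: ty
  shows "interp A \<subseteq> SN \<and>
         (\<forall>t s. t \<in> interp A \<longrightarrow> t \<rightarrow>\<^sub>d s \<longrightarrow> s \<in> interp A) \<and>
         (\<forall>t. neutral t \<longrightarrow> Red t \<subseteq> interp A \<longrightarrow> t \<in> interp A)"
proof (induction A)
  case Base
  have "\<forall>t s. t \<in> SN \<longrightarrow> t \<rightarrow>\<^sub>d s \<longrightarrow> s \<in> SN" using SN_step by blast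
  moreover have "\<forall>t. neutral t \<longrightarrow> Red t \<subseteq> SN \<longrightarrow> t \<in> SN"
  proof (intro allI impI)
    fix t assume r: "Red t \<subseteq> SN"
    show "t \<in> SN"
    proof (rule SN_intro)
      fix s assume "t \<rightarrow>\<^sub>d s"
      then show "s \<in> SN" using r by (auto simp: Red_def)
    qed
  qed
  ultimately show ?case unfolding interp.simps by (intro conjI subset_refl)
next
  case (Arr A B)
  have cr1A: "interp A \<subseteq> SN" and cr2A: "\<And>t s. t \<in> interp A \<Longrightarrow> t \<rightarrow>\<^sub>d s \<Longrightarrow> s \<in> interp A"
    and cr3A: "\<And>t. neutral t \<Longrightarrow> Red t \<subseteq> interp A \<Longrightarrow> t \<in> interp A" using Arr.IH(1) by blast+
  have cr1B: "interp B \<subseteq> SN" and cr2B: "\<And>t s. t \<in> interp B \<Longrightarrow> t \<rightarrow>\<^sub>d s \<Longrightarrow> s \<in> interp B"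
    and cr3B: "\<And>t. neutral t \<Longrightarrow> Red t \<subseteq> interp B \<Longrightarrow> t \<in> interp B" using Arr.IH(2) by blast+
  have var: "Var 0 \<in> interp A"
    by (rule cr3A) (auto simp: neutral_def Red_def elim: dist.cases)
  have "interp (Arr A B) \<subseteq> SN"
  proof
    fix t assume "t \<in> interp (Arr A B)"
    then have "App t (Var 0) \<in> interp B" using var by simp
    then show "t \<in> SN" using cr1B SN_app by blast
  qed
  moreover have "\<forall>t s. t \<in> interp (Arr A B) \<longrightarrow> t \<rightarrow>\<^sub>d s \<longrightarrow> s \<in> interp (Arr A B)"
    using cr2B dist.appL by auto
  moreover have "\<forall>t. neutral t \<longrightarrow> Red t \<subseteq> interp (Arr A B) \<longrightarrow> t \<in> interp (Arr A B)"
  proof (intro allI impI)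
    fix t assume nt: "neutral t" and rt: "Red t \<subseteq> interp (Arr A B)"
    have "s \<in> interp A \<longrightarrow> App t s \<in> interp B" if "s \<in> SN" for s
      using that
    proof (induction rule: SN_induct)
      case (step s)
      show ?case
      proof
        assume sA: "s \<in> interp A"
        show "App t s \<in> interp B"
        proof (rule cr3B[OF neutral_app], rule subsetI)
          fix u assume "u \<in> Red (App t s)"
          then have "App t s \<rightarrow>\<^sub>d u" by (simp add: Red_def)
          then show "u \<in> interp B"
          proof (cases)
            case (beta t)
            then show ?thesis using nt by (simp add: neutral_def)
          next
            case (pairapp t1 s1)
            then show ?thesis using nt by (simp add: neutral_def)
          next
            case (appL t')
            then show ?thesis using rt sA by (auto simp: Red_def)
          next
            case (appR s')
            then show ?thesis using step.IH sA cr2A by blast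
          qed
        qed
      qed
    qed
    then show "t \<in> interp (Arr A B)" using cr1A by auto
  qed
  ultimately show ?case by blast
next
  case (Conj A B)
  have cr1A: "interp A \<subseteq> SN" and cr2A: "\<And>t s. t \<in> interp A \<Longrightarrow> t \<rightarrow>\<^sub>d s \<Longrightarrow> s \<in> interp A"
    and cr3A: "\<And>t. neutral t \<Longrightarrow> Red t \<subseteq> interp A \<Longrightarrow> t \<in> interp A" using Conj.IH(1) by blast+
  have cr1B: "interp B \<subseteq> SN" and cr2B: "\<And>t s. t \<in> interp B \<Longrightarrow> t \<rightarrow>\<^sub>d s \<Longrightarrow> s \<in> interp B"
    and cr3B: "\<And>t. neutral t \<Longrightarrow> Red t \<subseteq> interp B \<Longrightarrow> t \<in> interp B" using Conj.IH(2) by blast+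
  have "interp (Conj A B) \<subseteq> SN" using cr1A SN_pi1 by auto
  moreover have "\<forall>t s. t \<in> interp (Conj A B) \<longrightarrow> t \<rightarrow>\<^sub>d s \<longrightarrow> s \<in> interp (Conj A B)"
    using cr2A cr2B dist.pi1 dist.pi2 by auto
  moreover have "\<forall>t. neutral t \<longrightarrow> Red t \<subseteq> interp (Conj A B) \<longrightarrow> t \<in> interp (Conj A B)"
  proof (intro allI impI)
    fix t assume nt: "neutral t" and rt: "Red t \<subseteq> interp (Conj A B)"
    have "Pi1 t \<in> interp A"
    proof (rule cr3A[OF neutral_pi1], rule subsetI)
      fix u assume "u \<in> Red (Pi1 t)"
      then have "Pi1 t \<rightarrow>\<^sub>d u" by (simp add: Red_def)
      then show "u \<in> interp A"
        by cases (use nt rt in \<open>auto simp: neutral_def Red_def\<close>)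
    qed
    moreover have "Pi2 t \<in> interp B"
    proof (rule cr3B[OF neutral_pi2], rule subsetI)
      fix u assume "u \<in> Red (Pi2 t)"
      then have "Pi2 t \<rightarrow>\<^sub>d u" by (simp add: Red_def)
      then show "u \<in> interp B"
        by cases (use nt rt in \<open>auto simp: neutral_def Red_def\<close>)
    qed
    ultimately show "t \<in> interp (Conj A B)" by simp
  qed
  ultimately show ?case by blast
qed

end
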